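(* For every commutative $n$-cube $D:\{0\to1\}^n\to\Delta_+$, the assignment $v\mapsto H_{comb}(c_v)$ together with the maps $H_{comb}(c_w)\to H_{comb}(c_v)$ described below forms a commutative diagram, i.e. a functor $H_{comb}(D):N(P_n)\to\mathrm{sSet}^{op}$ (an $n$-cube of correspondences in $\mathrm{sSet}^{op}$).
   Context: $\Delta_+$ is the category of finite linear orders and monotone maps. For $X\in\Delta_+$, $\langle X\rangle$ is the simplicial set represented by the ordered set $\mathrm{Hom}(X,\{0<1\})$ (pointwise order). For an interval $X$ of a linear order $Y$, $i_!:\langle X\rangle\to\langle Y\rangle$ extends $\varphi$ by $0$ below $X$ and $1$ above $X$. For monotone $\alpha:X\to Y$, $H_{comb}(\alpha)\subseteq\langle X\rangle$ is the simplicial subset given by the union of the images of $i_!:\langle\alpha^{-1}(y)\rangle\to\langle X\rangle$, $y\in Y$. For $X\xrightarrow{f}Y\xrightarrow{g}Z$ with $\alpha=gf$: the map $H_{comb}(f)\to H_{comb}(\alpha)$ is the inclusion inside $\langle X\rangle$ (each fiber of $f$ is a subinterval of a fiber of $\alpha$), and $H_{comb}(g)\to H_{comb}(\alpha)$ is, on each $\langle g^{-1}(z)\rangle$, the map $\langle g^{-1}(z)\rangle\to\langle\alpha^{-1}(z)\rangle$ induced by $f|:\alpha^{-1}(z)\to g^{-1}(z)$. $P_n$ is the poset of faces $v\in\{-,0,+\}^n$ of the $n$-cube, $v\to w$ iff $w$ is a subface of $v$ (i.e. $v_i=\pm\Rightarrow w_i=v_i$); face $v$ consists of vertices $\varepsilon$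 with $\varepsilon_i=0$ where $v_i=-$ and $\varepsilon_i=1$ where $v_i=+$. $c_v$ is the composite map in $D$ from the initial vertex of face $v$ to its terminal vertex. For $w$ a subface of $v$, write $c_v=h\circ c_w\circ f$ with $f$ from the initial vertex of $v$ to that of $w$ and $h$ from the terminal vertex of $w$ to that of $v$; the map $H_{comb}(c_w)\to H_{comb}(c_v)$ is the composite $H_{comb}(c_w)\to H_{comb}(h c_w)\to H_{comb}(hc_wf)$ of the two kinds of maps above. *)

theory Defs
  imports Main
begin

(* Delta_+ is modelled by its skeleton: the object m is the linear order {0..<m}
   (m = 0 is the empty order); a morphism m -> m' is a function nat => nat that is
   monotone on {..<m} and maps {..<m} into {..<m'}; maps are compared on {..<m}. *)
definition is_mor :: "nat \<Rightarrow> nat \<Rightarrow> (nat \<Rightarrow> nat) \<Rightarrow> bool" where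
  "is_mor m m' f \<longleftrightarrow> (\<forall>x<m. f x < m') \<and> mono_on {..<m} f"

(* Hom(X,{0<1}) for a finite ordered set X \<subseteq> nat; elements are canonical (False off X),
   ordered pointwise (False < True). *)
definition homs2 :: "nat set \<Rightarrow> (nat \<Rightarrow> bool) set" where
  "homs2 X = {\<phi>. mono_on X \<phi> \<and> (\<forall>i. i \<notin> X \<longrightarrow> \<phi> i = False)}"

definition nerve :: "'a::order set \<Rightarrow> nat \<Rightarrow> 'a list set" where
  "nerve P k = {xs. length xs = Suc k \<and> set xs \<subseteq> P \<and> sorted_wrt (\<le>) xs}"

definition dface :: "nat \<Rightarrow> 'a list \<Rightarrow> 'a list" where
  "dface i xs = take i xs @ drop (Suc i) xs"
definition degen :: "nat \<Rightarrow> 'a list \<Rightarrow> 'a list" where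
  "degen i xs = take (Suc i) xs @ drop i xs"

definition fib :: "(nat \<Rightarrow> nat) \<Rightarrow> nat \<Rightarrow> nat \<Rightarrow> nat set" where
  "fib \<alpha> m y = {x. x < m \<and> \<alpha> x = y}"

(* i_! : <alpha^{-1}(y)> -> <{..<m}>, extension by 0 below and 1 above the fibre
   (for an empty fibre its position is the one determined by y) *)
definition fib_ext :: "(nat \<Rightarrow> nat) \<Rightarrow> nat \<Rightarrow> nat \<Rightarrow> (nat \<Rightarrow> bool) \<Rightarrow> (nat \<Rightarrow> bool)" where
  "fib_ext \<alpha> m y \<phi> = (\<lambda>x. x < m \<and> (y < \<alpha> x \<or> (\<alpha> x = y \<and> \<phi> x)))"

definition Hcomb :: "(nat \<Rightarrow> nat) \<Rightarrow> nat \<Rightarrow> nat \<Rightarrow> nat \<Rightarrow> (nat \<Rightarrow> bool) list set" where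
  "Hcomb \<alpha> m m' k = (\<Union>y\<in>{..<m'}. map (fib_ext \<alpha> m y) ` nerve (homs2 (fib \<alpha> m y)) k)"

definition pull_fib :: "(nat \<Rightarrow> nat) \<Rightarrow> nat set \<Rightarrow> (nat \<Rightarrow> bool) \<Rightarrow> (nat \<Rightarrow> bool)" where
  "pull_fib f X \<psi> = (\<lambda>x. x \<in> X \<and> \<psi> (f x))"

(* For X -f-> Y -g-> Z (sizes mX, mY, mZ), alpha = g o f: the map H_comb(g) -> H_comb(alpha),
   defined on each piece <g^{-1}(z)> as the map induced by f| : alpha^{-1}(z) -> g^{-1}(z). *)
definition Hmap :: "(nat \<Rightarrow> nat) \<Rightarrow> nat \<Rightarrow> nat \<Rightarrow> (nat \<Rightarrow> nat) \<Rightarrow> nat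
    \<Rightarrow> (nat \<Rightarrow> bool) list \<Rightarrow> (nat \<Rightarrow> bool) list" where
  "Hmap g mY mZ f mX \<sigma> = (SOME r. \<exists>z \<tau>. z < mZ \<and> \<tau> \<in> nerve (homs2 (fib g mY z)) (length \<sigma> - 1)
      \<and> \<sigma> = map (fib_ext g mY z) \<tau>
      \<and> r = map (fib_ext (g \<circ> f) mX z) (map (pull_fib f (fib (g \<circ> f) mX z)) \<tau>))"

(* Commutative n-cube D : {0->1}^n -> Delta_+, i.e. a functor from the poset of subsets
   of {..<n} (vertex eps <-> set of coordinates equal to 1). *)
definition is_cube :: "nat \<Rightarrow> (nat set \<Rightarrow> nat) \<Rightarrow> (nat set \<Rightarrow> nat set \<Rightarrow> nat \<Rightarrow> nat) \<Rightarrow> bool" where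
  "is_cube n obj D \<longleftrightarrow>
     (\<forall>S T. S \<subseteq> T \<and> T \<subseteq> {..<n} \<longrightarrow> is_mor (obj S) (obj T) (D S T)) \<and>
     (\<forall>S. S \<subseteq> {..<n} \<longrightarrow> (\<forall>x<obj S. D S S x = x)) \<and>
     (\<forall>S T U. S \<subseteq> T \<and> T \<subseteq> U \<and> U \<subseteq> {..<n} \<longrightarrow> (\<forall>x<obj S. D T U (D S T x) = D S U x))"

(* faces of the n-cube: v \<in> {-,0,+}^n (canonically Zero outside {..<n}) *)
datatype sgn = Minus | Zero | Plus

definition faces :: "nat \<Rightarrow> (nat \<Rightarrow> sgn) set" where
  "faces n = {v. \<forall>i. n \<le> i \<longrightarrow> v i = Zero}"

(* v -> w in P_n iff w is a subface of v *)
definition subface :: "(nat \<Rightarrow> sgn) \<Rightarrow> (nat \<Rightarrow> sgn) \<Rightarrow> bool" where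
  "subface v w \<longleftrightarrow> (\<forall>i. v i \<noteq> Zero \<longrightarrow> w i = v i)"

definition init_v :: "(nat \<Rightarrow> sgn) \<Rightarrow> nat set" where
  "init_v v = {i. v i = Plus}"
definition term_v :: "nat \<Rightarrow> (nat \<Rightarrow> sgn) \<Rightarrow> nat set" where
  "term_v n v = {i. i < n \<and> v i \<noteq> Minus}"

definition cv :: "nat \<Rightarrow> (nat set \<Rightarrow> nat set \<Rightarrow> nat \<Rightarrow> nat) \<Rightarrow> (nat \<Rightarrow> sgn) \<Rightarrow> nat \<Rightarrow> nat" where
  "cv n D v = D (init_v v) (term_v n v)"

definition Hc :: "nat \<Rightarrow> (nat set \<Rightarrow> nat) \<Rightarrow> (nat set \<Rightarrow> nat set \<Rightarrow> nat \<Rightarrow> nat) \<Rightarrow> (nat \<Rightarrow> sgn)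
    \<Rightarrow> nat \<Rightarrow> (nat \<Rightarrow> bool) list set" where
  "Hc n obj D v k = Hcomb (cv n D v) (obj (init_v v)) (obj (term_v n v)) k"

(* For w a subface of v: c_v = h o c_w o f; the map H_comb(c_w) -> H_comb(c_v) is the composite
   of the inclusion H_comb(c_w) \<subseteq> H_comb(h o c_w) (identity on simplices) and
   H_comb(h o c_w) -> H_comb(h o c_w o f). *)
definition Htrans :: "nat \<Rightarrow> (nat set \<Rightarrow> nat) \<Rightarrow> (nat set \<Rightarrow> nat set \<Rightarrow> nat \<Rightarrow> nat)
    \<Rightarrow> (nat \<Rightarrow> sgn) \<Rightarrow> (nat \<Rightarrow> sgn) \<Rightarrow> (nat \<Rightarrow> bool) list \<Rightarrow> (nat \<Rightarrow> bool) list" where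
  "Htrans n obj D w v \<sigma> =
     Hmap (D (term_v n w) (term_v n v) \<circ> cv n D w) (obj (init_v w)) (obj (term_v n v))
          (D (init_v v) (init_v w)) (obj (init_v v)) \<sigma>"

end

theory Submission
  imports Defs
begin

definition pullP :: "(nat \<Rightarrow> nat) \<Rightarrow> nat \<Rightarrow> (nat \<Rightarrow> bool) \<Rightarrow> (nat \<Rightarrow> bool)" where
  "pullP f m \<phi> = (\<lambda>x. x < m \<and> \<phi> (f x))"

lemma Hmap_eq:
  assumes s: "\<sigma> \<in> Hcomb g mY mZ k" and fm: "\<forall>x<mX. f x < mY"
  shows "Hmap g mY mZ f mX \<sigma> = map (pullP f mX) \<sigma>"
proof -
  let ?P = "\<lambda>r. \<exists>z \<tau>. z < mZ \<and> \<tau> \<in> nerve (homs2 (fib g mY z)) (length \<sigma> - 1)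
      \<and> \<sigma> = map (fib_ext g mY z) \<tau>
      \<and> r = map (fib_ext (g \<circ> f) mX z) (map (pull_fib f (fib (g \<circ> f) mX z)) \<tau>)"
  from s obtain z \<tau> where z: "z < mZ" and t: "\<tau> \<in> nerve (homs2 (fib g mY z)) k"
    and e: "\<sigma> = map (fib_ext g mY z) \<tau>"
    unfolding Hcomb_def by auto
  have "length \<sigma> - 1 = k" using t e by (simp add: nerve_def)
  hence "\<exists>r. ?P r" using z t e by blast
  hence "?P (SOME r. ?P r)" by (rule someI_ex)
  then obtain z' \<tau>' where e': "\<sigma> = map (fib_ext g mY z') \<tau>'"
    and r: "(SOME r. ?P r) = map (fib_ext (g \<circ> f) mX z') (map (pull_fib f (fib (g \<circ> f) mX z')) \<tau>')"
    by blast
  have pw: "fib_ext (g \<circ> f) mX z' (pull_fib f (fib (g \<circ> f) mX z') \<psi>) = pullP f mX (fib_ext g mY z' \<psi>)" for \<psi>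
    using fm by (auto simp: fun_eq_iff fib_ext_def pull_fib_def fib_def pullP_def)
  have "Hmap g mY mZ f mX \<sigma> = (SOME r. ?P r)" unfolding Hmap_def by simp
  also have "\<dots> = map (pullP f mX) \<sigma>" using r e' pw by simp
  finally show ?thesis .
qed

lemma Hcomb_pull:
  assumes c: "is_mor mW mT c" and h: "is_mor mT mS h" and f: "is_mor mV mW f"
    and a: "\<forall>x<mV. a x = h (c (f x))" and s: "\<sigma> \<in> Hcomb c mW mT k"
  shows "map (pullP f mV) \<sigma> \<in> Hcomb a mV mS k"
proof -
  from s obtain y \<tau> where y: "y < mT" and t: "\<tau> \<in> nerve (homs2 (fib c mW y)) k"
    and e: "\<sigma> = map (fib_ext c mW y) \<tau>"
    unfolding Hcomb_def by auto
  define z where "z = h y"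
  have z: "z < mS" using h y unfolding is_mor_def z_def by auto
  define R where "R = (\<lambda>\<psi> x. x \<in> fib a mV z \<and> (y < c (f x) \<or> (c (f x) = y \<and> \<psi> (f x))))"
  have hm: "h p \<le> h q" if "p \<le> q" "q < mT" for p q
    using h that unfolding is_mor_def mono_on_def by auto
  have cm: "c p \<le> c q" if "p \<le> q" "q < mW" for p q
    using c that unfolding is_mor_def mono_on_def by auto
  have fm: "f p \<le> f q" if "p \<le> q" "q < mV" for p q
    using f that unfolding is_mor_def mono_on_def by auto
  have fl: "f x < mW" if "x < mV" for x using f that unfolding is_mor_def by auto
  have cl: "c x < mT" if "x < mW" for x using c that unfolding is_mor_def by auto
  have Rh: "R \<psi> \<in> homs2 (fib a mV z)" if "\<psi> \<in> homs2 (fib c mW y)" for \<psi>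
    unfolding homs2_def mono_on_def
  proof (intro CollectI conjI allI impI)
    show "\<not> i \<in> fib a mV z \<Longrightarrow> R \<psi> i = False" for i by (simp add: R_def)
    fix p q assume pq: "p \<in> fib a mV z \<and> q \<in> fib a mV z \<and> p \<le> q"
    hence pl: "p < mV" and ql: "q < mV" by (auto simp: fib_def)
    have fpq: "f p \<le> f q" using fm[of p q] pq ql by blast
    have cpq: "c (f p) \<le> c (f q)" using cm[of "f p" "f q"] fpq fl[OF ql] by blast
    have psm: "\<psi> (f p) \<le> \<psi> (f q)" if "c (f p) = y" "c (f q) = y"
      using \<open>\<psi> \<in> homs2 (fib c mW y)\<close> that fpq fl pl ql
      unfolding homs2_def mono_on_def fib_def by auto
    show "R \<psi> p \<le> R \<psi> q"
      using pq cpq psm unfolding R_def le_bool_def by (metis le_neq_implies_less order.strict_trans2)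
  qed
  have Rmono: "R \<psi>1 \<le> R \<psi>2" if "\<psi>1 \<le> \<psi>2" for \<psi>1 \<psi>2
    using that unfolding R_def le_fun_def le_bool_def by auto
  have nt: "map R \<tau> \<in> nerve (homs2 (fib a mV z)) k"
  proof -
    have l: "length \<tau> = Suc k" and st: "set \<tau> \<subseteq> homs2 (fib c mW y)"
      and so: "sorted_wrt (\<le>) \<tau>" using t unfolding nerve_def by auto
    have "set (map R \<tau>) \<subseteq> homs2 (fib a mV z)" using st Rh by auto
    moreover have "sorted_wrt (\<le>) (map R \<tau>)"
      unfolding sorted_wrt_map by (rule sorted_wrt_mono_rel[OF _ so]) (rule Rmono)
    ultimately show ?thesis using l unfolding nerve_def by simp
  qed
  have pw: "pullP f mV (fib_ext c mW y \<psi>) = fib_ext a mV z (R \<psi>)" for \<psi>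
  proof (rule ext)
    fix x
    show "pullP f mV (fib_ext c mW y \<psi>) x = fib_ext a mV z (R \<psi>) x"
    proof (cases "x < mV")
      case True
      have fx: "f x < mW" using fl True .
      have ax: "a x = h (c (f x))" using a True by auto
      have cx: "c (f x) < mT" using cl fx .
      consider "c (f x) < y" | "c (f x) = y" | "y < c (f x)" by linarith
      then show ?thesis
      proof cases
        case 1
        hence "a x \<le> z" using hm[of "c (f x)" y] y ax z_def by auto
        thus ?thesis using 1 True fx unfolding pullP_def fib_ext_def R_def by auto
      next
        case 2
        thus ?thesis using True fx ax unfolding pullP_def fib_ext_def R_def fib_def z_def by auto
      next
        case 3
        hence "z \<le> a x" using hm[of y "c (f x)"] cx ax z_def by auto
        thus ?thesis using 3 True fx unfolding pullP_def fib_ext_def R_def fib_def by auto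
      qed
    next
      case False
      thus ?thesis unfolding pullP_def fib_ext_def by auto
    qed
  qed
  have "map (pullP f mV) \<sigma> = map (fib_ext a mV z) (map R \<tau>)"
    using e pw by simp
  thus ?thesis unfolding Hcomb_def using z nt by blast
qed

lemma nerve_dface:
  assumes "\<tau> \<in> nerve P k" "0 < k" "i \<le> k"
  shows "dface i \<tau> \<in> nerve P (k - 1)"
proof -
  have l: "length \<tau> = Suc k" and st: "set \<tau> \<subseteq> P" and so: "sorted_wrt (\<le>) \<tau>"
    using assms(1) unfolding nerve_def by auto
  have "set (dface i \<tau>) \<subseteq> set \<tau>" unfolding dface_def
    using set_take_subset set_drop_subset by fastforce
  moreover have "sorted_wrt (\<le>) (dface i \<tau>)"
  proof -
    have "sorted_wrt (\<le>) (take i \<tau> @ drop i \<tau>)" using so by simp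
    hence a: "sorted_wrt (\<le>) (take i \<tau>)" and b: "sorted_wrt (\<le>) (drop i \<tau>)"
      and c: "\<forall>x\<in>set (take i \<tau>). \<forall>y\<in>set (drop i \<tau>). x \<le> y"
      unfolding sorted_wrt_append by auto
    have "drop (Suc i) \<tau> = drop 1 (drop i \<tau>)" by simp
    hence "set (drop (Suc i) \<tau>) \<subseteq> set (drop i \<tau>)" by (metis set_drop_subset)
    moreover have "sorted_wrt (\<le>) (drop (Suc i) \<tau>)" using so by (rule sorted_wrt_drop)
    ultimately show ?thesis unfolding dface_def sorted_wrt_append using a c by blast
  qed
  moreover have "length (dface i \<tau>) = Suc (k - 1)" using l assms(2,3) unfolding dface_def by simp
  ultimately show ?thesis using st unfolding nerve_def by auto
qed

lemma nerve_degen: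
  assumes "\<tau> \<in> nerve P k" "i \<le> k"
  shows "degen i \<tau> \<in> nerve P (Suc k)"
proof -
  have l: "length \<tau> = Suc k" and st: "set \<tau> \<subseteq> P" and so: "sorted_wrt (\<le>) \<tau>"
    using assms(1) unfolding nerve_def by auto
  have "set (degen i \<tau>) \<subseteq> set \<tau>" unfolding degen_def
    using set_take_subset set_drop_subset by fastforce
  moreover have "sorted_wrt (\<le>) (degen i \<tau>)"
  proof -
    have a: "sorted_wrt (\<le>) (take (Suc i) \<tau>)" using so by (rule sorted_wrt_take)
    have b: "sorted_wrt (\<le>) (drop i \<tau>)" using so by (rule sorted_wrt_drop)
    have c: "x \<le> y" if xin: "x \<in> set (take (Suc i) \<tau>)" and yin: "y \<in> set (drop i \<tau>)" for x y
    proof -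
      obtain p where p: "p < length (take (Suc i) \<tau>)" "x = take (Suc i) \<tau> ! p"
        using xin by (metis in_set_conv_nth)
      obtain q where q: "q < length (drop i \<tau>)" "y = drop i \<tau> ! q"
        using yin by (metis in_set_conv_nth)
      have px: "x = \<tau> ! p" "p \<le> i" "p < length \<tau>" using p by auto
      have qy: "y = \<tau> ! (i + q)" "i + q < length \<tau>" using q by auto
      show ?thesis
      proof (cases "p = i + q")
        case True thus ?thesis using px qy by simp
      next
        case False
        hence "p < i + q" using px by simp
        thus ?thesis using so px qy by (metis sorted_wrt_nth_less)
      qed
    qed
    show ?thesis unfolding degen_def sorted_wrt_append using a b c by blast
  qed
  moreover have "length (degen i \<tau>) = Suc (Suc k)" using l assms(2) unfolding degen_def by simp
  ultimately show ?thesis using st unfolding nerve_def by auto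
qed

lemma Hcomb_dface:
  assumes "\<sigma> \<in> Hcomb c m m' k" "0 < k" "i \<le> k"
  shows "dface i \<sigma> \<in> Hcomb c m m' (k - 1)"
proof -
  from assms(1) obtain y \<tau> where y: "y < m'" and t: "\<tau> \<in> nerve (homs2 (fib c m y)) k"
    and e: "\<sigma> = map (fib_ext c m y) \<tau>" unfolding Hcomb_def by auto
  have "dface i \<sigma> = map (fib_ext c m y) (dface i \<tau>)" using e unfolding dface_def
    by (simp add: take_map drop_map)
  thus ?thesis unfolding Hcomb_def using y nerve_dface[OF t assms(2,3)] by blast
qed

lemma Hcomb_degen:
  assumes "\<sigma> \<in> Hcomb c m m' k" "i \<le> k"
  shows "degen i \<sigma> \<in> Hcomb c m m' (Suc k)"
proof -
  from assms(1) obtain y \<tau> where y: "y < m'" and t: "\<tau> \<in> nerve (homs2 (fib c m y)) k"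
    and e: "\<sigma> = map (fib_ext c m y) \<tau>" unfolding Hcomb_def by auto
  have "degen i \<sigma> = map (fib_ext c m y) (degen i \<tau>)" using e unfolding degen_def
    by (simp add: take_map drop_map)
  thus ?thesis unfolding Hcomb_def using y nerve_degen[OF t assms(2)] by blast
qed

lemma Hcomb_bound:
  assumes "\<sigma> \<in> Hcomb c m m' k" "\<phi> \<in> set \<sigma>" "\<phi> x"
  shows "x < m"
  using assms unfolding Hcomb_def fib_ext_def by auto

lemma is_mor_id: "is_mor m m (\<lambda>x. x)"
  unfolding is_mor_def mono_on_def by auto

lemma faces_init: "v \<in> faces n \<Longrightarrow> init_v v \<subseteq> term_v n v"
proof
  fix x assume v: "v \<in> faces n" and x: "x \<in> init_v v"
  hence "v x = Plus" unfolding init_v_def by simp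
  moreover have "\<not> n \<le> x" using v \<open>v x = Plus\<close> unfolding faces_def by auto
  ultimately show "x \<in> term_v n v" unfolding term_v_def by simp
qed

lemma term_sub: "term_v n v \<subseteq> {..<n}"
  unfolding term_v_def by auto

lemma subface_init: "subface v w \<Longrightarrow> init_v v \<subseteq> init_v w"
  unfolding subface_def init_v_def by auto

lemma subface_term: "subface v w \<Longrightarrow> term_v n w \<subseteq> term_v n v"
proof
  fix x assume s: "subface v w" and x: "x \<in> term_v n w"
  hence "x < n" "w x \<noteq> Minus" unfolding term_v_def by auto
  moreover have "v x \<noteq> Minus"
  proof
    assume "v x = Minus" hence "w x = Minus" using s unfolding subface_def by force
    thus False using \<open>w x \<noteq> Minus\<close> by simp
  qed
  ultimately show "x \<in> term_v n v" unfolding term_v_def by simp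
qed

lemma cube_mor: "is_cube n obj D \<Longrightarrow> S \<subseteq> T \<Longrightarrow> T \<subseteq> {..<n} \<Longrightarrow> is_mor (obj S) (obj T) (D S T)"
  unfolding is_cube_def by (metis)
lemma cube_comp: "is_cube n obj D \<Longrightarrow> S \<subseteq> T \<Longrightarrow> T \<subseteq> U \<Longrightarrow> U \<subseteq> {..<n} \<Longrightarrow> x < obj S
   \<Longrightarrow> D T U (D S T x) = D S U x"
  unfolding is_cube_def by metis
lemma cube_id: "is_cube n obj D \<Longrightarrow> S \<subseteq> {..<n} \<Longrightarrow> x < obj S \<Longrightarrow> D S S x = x"
  unfolding is_cube_def by metis

lemma Htrans_facts:
  assumes cube: "is_cube n obj D" and v: "v \<in> faces n" and w: "w \<in> faces n" and sf: "subface v w"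
    and s: "\<sigma> \<in> Hc n obj D w k"
  shows "Htrans n obj D w v \<sigma> = map (pullP (D (init_v v) (init_v w)) (obj (init_v v))) \<sigma>"
    and "Htrans n obj D w v \<sigma> \<in> Hc n obj D v k"
proof -
  let ?iv = "init_v v" and ?iw = "init_v w" and ?tv = "term_v n v" and ?tw = "term_v n w"
  have i1: "?iv \<subseteq> ?iw" using sf by (rule subface_init)
  have i2: "?iw \<subseteq> ?tw" using w by (rule faces_init)
  have i3: "?tw \<subseteq> ?tv" using sf by (rule subface_term)
  have i4: "?tv \<subseteq> {..<n}" by (rule term_sub)
  have i5: "?tw \<subseteq> {..<n}" by (rule term_sub)
  have i6: "?iv \<subseteq> ?tw" using i1 i2 by blast
  have i7: "?iw \<subseteq> {..<n}" using i2 i5 by blast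
  have mc: "is_mor (obj ?iw) (obj ?tw) (cv n D w)" unfolding cv_def using cube i2 i5 by (rule cube_mor)
  have mh: "is_mor (obj ?tw) (obj ?tv) (D ?tw ?tv)" using cube i3 i4 by (rule cube_mor)
  have mf: "is_mor (obj ?iv) (obj ?iw) (D ?iv ?iw)" using cube i1 i7 by (rule cube_mor)
  have sw: "\<sigma> \<in> Hcomb (cv n D w) (obj ?iw) (obj ?tw) k" using s unfolding Hc_def .
  have "map (pullP (\<lambda>x. x) (obj ?iw)) \<sigma> \<in> Hcomb (D ?tw ?tv \<circ> cv n D w) (obj ?iw) (obj ?tv) k"
    by (rule Hcomb_pull[OF mc mh is_mor_id _ sw]) simp
  moreover have "map (pullP (\<lambda>x. x) (obj ?iw)) \<sigma> = \<sigma>"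
  proof (rule map_idI)
    fix \<phi> assume "\<phi> \<in> set \<sigma>"
    thus "pullP (\<lambda>x. x) (obj ?iw) \<phi> = \<phi>" unfolding pullP_def
      using Hcomb_bound[OF sw] by (auto simp: fun_eq_iff)
  qed
  ultimately have sg: "\<sigma> \<in> Hcomb (D ?tw ?tv \<circ> cv n D w) (obj ?iw) (obj ?tv) k" by simp
  have fm: "\<forall>x<obj ?iv. D ?iv ?iw x < obj ?iw" using mf unfolding is_mor_def by blast
  show eq: "Htrans n obj D w v \<sigma> = map (pullP (D ?iv ?iw) (obj ?iv)) \<sigma>"
    unfolding Htrans_def by (rule Hmap_eq[OF sg fm])
  have a: "\<forall>x<obj ?iv. cv n D v x = D ?tw ?tv (cv n D w (D ?iv ?iw x))"
  proof (intro allI impI)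
    fix x assume x: "x < obj ?iv"
    have "cv n D w (D ?iv ?iw x) = D ?iv ?tw x" unfolding cv_def
      using cube_comp[OF cube i1 i2 i5 x] .
    moreover have "D ?tw ?tv (D ?iv ?tw x) = D ?iv ?tv x"
      using cube_comp[OF cube i6 i3 i4 x] .
    ultimately show "cv n D v x = D ?tw ?tv (cv n D w (D ?iv ?iw x))" unfolding cv_def by simp
  qed
  show "Htrans n obj D w v \<sigma> \<in> Hc n obj D v k"
    unfolding eq Hc_def by (rule Hcomb_pull[OF mc mh mf a sw])
qed

theorem proposition4p7:
  fixes n :: nat
    and obj :: "nat set \<Rightarrow> nat"
    and D :: "nat set \<Rightarrow> nat set \<Rightarrow> nat \<Rightarrow> nat"
  assumes "is_cube n obj D"
  shows
    "(\<forall>v w. v \<in> faces n \<and> w \<in> faces n \<and> subface v w \<longrightarrow>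
        (\<forall>k \<sigma>. \<sigma> \<in> Hc n obj D w k \<longrightarrow>
           Htrans n obj D w v \<sigma> \<in> Hc n obj D v k \<and>
           (\<forall>i\<le>k. 0 < k \<longrightarrow> Htrans n obj D w v (dface i \<sigma>) = dface i (Htrans n obj D w v \<sigma>)) \<and>
           (\<forall>i\<le>k. Htrans n obj D w v (degen i \<sigma>) = degen i (Htrans n obj D w v \<sigma>))))
     \<and> (\<forall>v. v \<in> faces n \<longrightarrow> (\<forall>k \<sigma>. \<sigma> \<in> Hc n obj D v k \<longrightarrow> Htrans n obj D v v \<sigma> = \<sigma>))
     \<and> (\<forall>u w v. u \<in> faces n \<and> w \<in> faces n \<and> v \<in> faces n \<and> subface v w \<and> subface w u \<longrightarrow>
        (\<forall>k \<sigma>. \<sigma> \<in> Hc n obj D u k \<longrightarrow>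
           Htrans n obj D w v (Htrans n obj D u w \<sigma>) = Htrans n obj D u v \<sigma>))"
proof (intro conjI allI impI)
  note cube = assms
  fix v w k \<sigma> assume vw: "v \<in> faces n \<and> w \<in> faces n \<and> subface v w" and s: "\<sigma> \<in> Hc n obj D w k"
  hence v: "v \<in> faces n" and w: "w \<in> faces n" and sf: "subface v w" by auto
  show "Htrans n obj D w v \<sigma> \<in> Hc n obj D v k" using Htrans_facts(2)[OF cube v w sf s] .
  {
    fix i assume i: "i \<le> k" "0 < k"
    have s': "dface i \<sigma> \<in> Hc n obj D w (k - 1)" using s Hcomb_dface[OF _ i(2) i(1)] unfolding Hc_def by blast
    show "Htrans n obj D w v (dface i \<sigma>) = dface i (Htrans n obj D w v \<sigma>)"
      unfolding Htrans_facts(1)[OF cube v w sf s'] Htrans_facts(1)[OF cube v w sf s]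
      by (simp add: dface_def take_map drop_map)
  }
  {
    fix i assume i: "i \<le> k"
    have s': "degen i \<sigma> \<in> Hc n obj D w (Suc k)" using s Hcomb_degen[OF _ i] unfolding Hc_def by blast
    show "Htrans n obj D w v (degen i \<sigma>) = degen i (Htrans n obj D w v \<sigma>)"
      unfolding Htrans_facts(1)[OF cube v w sf s'] Htrans_facts(1)[OF cube v w sf s]
      by (simp add: degen_def take_map drop_map)
  }
next
  note cube = assms
  fix v k \<sigma> assume v: "v \<in> faces n" and s: "\<sigma> \<in> Hc n obj D v k"
  have sf: "subface v v" unfolding subface_def by simp
  have iv: "init_v v \<subseteq> {..<n}" using faces_init[OF v] term_sub by blast
  show "Htrans n obj D v v \<sigma> = \<sigma>"
    unfolding Htrans_facts(1)[OF cube v v sf s]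
  proof (rule map_idI)
    fix \<phi> assume "\<phi> \<in> set \<sigma>"
    thus "pullP (D (init_v v) (init_v v)) (obj (init_v v)) \<phi> = \<phi>" unfolding pullP_def
      using Hcomb_bound[OF s[unfolded Hc_def]] cube_id[OF cube iv] by (auto simp: fun_eq_iff)
  qed
next
  note cube = assms
  fix u w v k \<sigma> assume h: "u \<in> faces n \<and> w \<in> faces n \<and> v \<in> faces n \<and> subface v w \<and> subface w u"
    and s: "\<sigma> \<in> Hc n obj D u k"
  hence u: "u \<in> faces n" and w: "w \<in> faces n" and v: "v \<in> faces n" and vw: "subface v w"
    and wu: "subface w u" by auto
  have vu: "subface v u" using vw wu unfolding subface_def by metis
  have s2: "Htrans n obj D u w \<sigma> \<in> Hc n obj D w k" using Htrans_facts(2)[OF cube w u wu s] .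
  have i1: "init_v v \<subseteq> init_v w" using vw by (rule subface_init)
  have i2: "init_v w \<subseteq> init_v u" using wu by (rule subface_init)
  have i3: "init_v u \<subseteq> {..<n}" using faces_init[OF u] term_sub by blast
  have mf: "is_mor (obj (init_v v)) (obj (init_v w)) (D (init_v v) (init_v w))"
    using cube i1 i2 i3 by (meson cube_mor order_trans)
  have pw: "pullP (D (init_v v) (init_v w)) (obj (init_v v)) (pullP (D (init_v w) (init_v u)) (obj (init_v w)) \<phi>)
      = pullP (D (init_v v) (init_v u)) (obj (init_v v)) \<phi>" for \<phi>
    unfolding pullP_def using mf cube_comp[OF cube i1 i2 i3] unfolding is_mor_def
    by (auto simp: fun_eq_iff)
  show "Htrans n obj D w v (Htrans n obj D u w \<sigma>) = Htrans n obj D u v \<sigma>"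
    using Htrans_facts(1)[OF cube v w vw s2] Htrans_facts(1)[OF cube w u wu s]
      Htrans_facts(1)[OF cube v u vu s]
    by (simp add: pw)
qed

end
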